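(* Let $I\subseteq[0,\infty)$ be an interval, let $f:I\to\mathbb{R}$ be twice differentiable on $I^\circ$, and let $a,b\in I^\circ$ with $a<b$ such that $f''\in L^1[a,b]$. Let $q>1$, $p=\frac{q}{q-1}$, assume $2q-p-1>0$, and assume $|f''|^q$ is quasi-convex on $[a,b]$. Let $d: a=x_0<x_1<\dots<x_n=b$ be a partition of $[a,b]$, let $T(f,d)=\sum_{i=0}^{n-1}\frac{f(x_i)+f(x_{i+1})}{2}(x_{i+1}-x_i)$ and $E(f,d)=\int_a^b f(x)\,dx-T(f,d)$. Then $$|E(f,d)|\le \frac12\left(\frac{q-1}{2q-p-1}\right)^{\frac{q-1}{q}}\bigl(\beta(p+1,q+1)\bigr)^{\frac1q}\sum_{i=0}^{n-1}(x_{i+1}-x_i)^3\left(\max\{|f''(x_i)|^q,|f''(x_{i+1})|^q\}\right)^{\frac1q}.$$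
   Context: A function $g:[a,b]\to\mathbb{R}$ is quasi-convex on $[a,b]$ if $g(\lambda x+(1-\lambda)y)\le\max\{g(x),g(y)\}$ for all $x,y\in[a,b]$ and $\lambda\in[0,1]$. $\beta(x,y)=\int_0^1 t^{x-1}(1-t)^{y-1}\,dt$ for $x,y>0$. *)

theory Defs
  imports "HOL-Analysis.Analysis"
begin

definition quasi_convex_on :: "real set \<Rightarrow> (real \<Rightarrow> real) \<Rightarrow> bool" where
  "quasi_convex_on S g \<longleftrightarrow>
     (\<forall>x\<in>S. \<forall>y\<in>S. \<forall>l::real. 0 \<le> l \<and> l \<le> 1 \<longrightarrow>
        g (l * x + (1 - l) * y) \<le> max (g x) (g y))"

definition beta_fun :: "real \<Rightarrow> real \<Rightarrow> real" where
  "beta_fun x y = integral {0..1} (\<lambda>t. t powr (x - 1) * (1 - t) powr (y - 1))"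

end

theory Submission
  imports Defs
begin

lemma const_bound:
  fixes p q :: real
  assumes q: "q > 1" and p: "p = q / (q - 1)" and pq: "2 * q - p - 1 > 0"
  shows "1/6 \<le> ((q - 1) / (2 * q - p - 1)) powr ((q - 1) / q) * (beta_fun (p + 1) (q + 1)) powr (1 / q)"
proof -
  define A where "A = (q - 1) / (2 * q - p - 1)"
  define B where "B = beta_fun (p + 1) (q + 1)"
  define e where "e = p * (q - 2) / (q - 1)"
  define \<alpha> where "\<alpha> = A powr (1/p)"
  have p1: "p > 1" using q unfolding p by (simp add: less_divide_eq)
  have pq1: "1/p + 1/q = 1" using q unfolding p by (simp add: field_simps)
  have exp: "(q - 1) / q = 1 / p" using q unfolding p by (simp add: field_simps)
  have A0: "A > 0" using q pq by (simp add: A_def)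
  have e1: "e + 1 = 1 / A"
    using q pq unfolding e_def A_def p by (simp add: field_simps)
  have em: "e > -1" using e1 A0 by (smt (verit) divide_pos_pos)
  have \<alpha>0: "\<alpha> > 0" using A0 by (simp add: \<alpha>_def)
  have \<alpha>p: "\<alpha> powr p = A" using A0 p1 by (simp add: \<alpha>_def powr_powr)
  have intA: "((\<lambda>t. t powr e) has_integral A) {0..1}"
    proof -
    have "1 / (e + 1) = A" using e1 A0 by simp
    then show ?thesis using has_integral_powr_from_0[OF em, of 1] by simp
  qed
  have contB: "continuous_on {0..1} (\<lambda>t::real. t powr p * (1 - t) powr q)"
    using p1 q by (intro continuous_intros continuous_on_powr') auto
  have intB: "((\<lambda>t. t powr p * (1 - t) powr q) has_integral B) {0..1}"
    unfolding B_def beta_fun_def using integrable_continuous_interval[OF contB]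
    by (simp add: integrable_integral)
  have B0: "B \<ge> 0" using intB by (rule has_integral_nonneg) auto
  have int6: "((\<lambda>t::real. t * (1 - t)) has_integral (1/6)) {0..1}"
  proof -
    have "((\<lambda>t::real. t * (1 - t)) has_integral ((\<lambda>t. t^2/2 - t^3/3) 1 - (\<lambda>t. t^2/2 - t^3/3) 0)) {0..1}"
      by (intro fundamental_theorem_of_calculus)
         (auto simp flip: has_real_derivative_iff_has_vector_derivative intro!: derivative_eq_intros simp: algebra_simps power2_eq_square)
    then show ?thesis by simp
  qed
  have key: "1/6 \<le> \<alpha> * \<beta> * (1/p + B / (q * \<beta> powr q))" if \<beta>0: "\<beta> > 0" for \<beta>
  proof -
    have pw: "t * (1 - t) \<le> \<alpha> * \<beta> * (t powr e / (p * A) + t powr p * (1 - t) powr q / (q * \<beta> powr q))"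
      if t: "t \<in> {0..1}" for t :: real
    proof (cases "t = 0")
      case True then show ?thesis using \<alpha>0 \<beta>0 by simp
    next
      case False
      hence t0: "t > 0" using t by auto
      define g where "g = t powr ((q - 2) / (q - 1))"
      define h where "h = t powr (1 / (q - 1)) * (1 - t)"
      have g0: "g \<ge> 0" and h0: "h \<ge> 0" using t by (auto simp: g_def h_def)
      have gh: "g * h = t * (1 - t)"
      proof -
        have "g * h = (t powr ((q - 2) / (q - 1)) * t powr (1 / (q - 1))) * (1 - t)"
          by (simp add: g_def h_def)
        also have "t powr ((q - 2) / (q - 1)) * t powr (1 / (q - 1)) = t powr 1"
          using q t0 by (simp add: powr_add[symmetric] add_divide_distrib[symmetric] )
        finally show ?thesis using t0 by simp
      qed
      have gp: "(g / \<alpha>) powr p = t powr e / A"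
        using t0 \<alpha>0 g0 \<alpha>p by (simp add: g_def powr_divide powr_powr e_def mult.commute)
      have hq: "(h / \<beta>) powr q = t powr p * (1 - t) powr q / \<beta> powr q"
        using t0 t \<beta>0 q p by (simp add: h_def powr_divide powr_mult powr_powr)
      have Y: "(g / \<alpha>) * (h / \<beta>) \<le> (g / \<alpha>) powr p / p + (h / \<beta>) powr q / q"
        by (rule Youngs_inequality) (use p1 q pq1 g0 h0 \<alpha>0 \<beta>0 in auto)
      have "t * (1 - t) = \<alpha> * \<beta> * ((g / \<alpha>) * (h / \<beta>))" using gh \<alpha>0 \<beta>0 by simp
      also have "\<dots> \<le> \<alpha> * \<beta> * ((g / \<alpha>) powr p / p + (h / \<beta>) powr q / q)"
        by (rule mult_left_mono[OF Y]) (use \<alpha>0 \<beta>0 in simp)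
      also have "\<dots> = \<alpha> * \<beta> * (t powr e / (p * A) + t powr p * (1 - t) powr q / (q * \<beta> powr q))"
        by (simp add: gp hq mult.commute)
      finally show ?thesis .
    qed
    have intR: "((\<lambda>t. \<alpha> * \<beta> * (t powr e / (p * A) + t powr p * (1 - t) powr q / (q * \<beta> powr q)))
        has_integral (\<alpha> * \<beta> * (A / (p * A) + B / (q * \<beta> powr q)))) {0..1}"
      by (intro has_integral_mult_right has_integral_add has_integral_divide intA intB)
    have "1/6 \<le> \<alpha> * \<beta> * (A / (p * A) + B / (q * \<beta> powr q))"
      by (rule has_integral_le[OF int6 intR]) (use pw in auto)
    then show ?thesis using A0 by simp
  qed
  show ?thesis
  proof (cases "B = 0")
    case True
    have b: "p / (12 * \<alpha>) > 0" using p1 \<alpha>0 by simp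
    from key[OF b] True p1 \<alpha>0 show ?thesis by simp
  next
    case False
    hence Bp: "B > 0" using B0 by simp
    have b: "B powr (1/q) > 0" using Bp by simp
    have "(B powr (1/q)) powr q = B" using Bp q by (simp add: powr_powr)
    with key[OF b] Bp q pq1 show ?thesis
      by (simp add: exp \<alpha>_def A_def B_def[symmetric])
  qed
qed
lemma convex_zero_ends:
  fixes \<psi> :: "real \<Rightarrow> real"
  assumes "convex_on {u..v} \<psi>" "u < v" "\<psi> u = 0" "\<psi> v = 0" "t \<in> {u..v}"
  shows "\<psi> t \<le> 0"
proof -
  define s where "s = (t - u) / (v - u)"
  have s: "0 \<le> s" "s \<le> 1" using assms(2,5) by (auto simp: s_def field_simps)
  have "s * (v - u) = t - u" using assms(2) by (simp add: s_def)
  then have t: "t = (1 - s) *\<^sub>R u + s *\<^sub>R v" by (simp add: algebra_simps)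
  have "\<psi> ((1 - s) *\<^sub>R u + s *\<^sub>R v) \<le> (1 - s) * \<psi> u + s * \<psi> v"
    by (rule convex_onD[OF assms(1) s]) (use assms(2) in auto)
  then show ?thesis using t assms(3,4) by simp
qed

lemma trap_local:
  fixes f f' f'' :: "real \<Rightarrow> real" and u v K :: real
  assumes uv: "u < v"
    and d1: "\<And>t. t \<in> {u..v} \<Longrightarrow> (f has_real_derivative f' t) (at t)"
    and d2: "\<And>t. t \<in> {u..v} \<Longrightarrow> (f' has_real_derivative f'' t) (at t)"
    and bd: "\<And>t. t \<in> {u..v} \<Longrightarrow> \<bar>f'' t\<bar> \<le> K"
  shows "\<bar>integral {u..v} f - (f u + f v) / 2 * (v - u)\<bar> \<le> K * (v - u) ^ 3 / 12"
proof -
  define c where "c = (f v - f u) / (v - u)"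
  define L where "L t = f u + c * (t - u)" for t
  define w where "w t = K * ((t - u) * (v - t)) / 2" for t
  have cv: "convex {u..v}" by simp
  have Lu: "L u = f u" and Lv: "L v = f v" using uv by (auto simp: L_def c_def)
  have up: "f t - L t \<le> w t" if t: "t \<in> {u..v}" for t
  proof -
    define \<psi> where "\<psi> t = (f t - L t) - w t" for t
    have "convex_on {u..v} \<psi>"
    proof (rule f''_ge0_imp_convex[OF cv])
      show "(\<psi> has_real_derivative (f' t - c - K * ((v - t) - (t - u)) / 2)) (at t)" if "t \<in> {u..v}" for t
        unfolding \<psi>_def L_def w_def
        by (auto intro!: derivative_eq_intros d1[OF that] simp: field_simps)
      show "((\<lambda>t. f' t - c - K * ((v - t) - (t - u)) / 2) has_real_derivative (f'' t + K)) (at t)"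
        if "t \<in> {u..v}" for t
        by (auto intro!: derivative_eq_intros d2[OF that] simp: field_simps)
      show "0 \<le> f'' t + K" if "t \<in> {u..v}" for t using bd[OF that] by linarith
    qed
    moreover have "\<psi> u = 0" "\<psi> v = 0" by (auto simp: \<psi>_def Lu Lv w_def)
    ultimately have "\<psi> t \<le> 0" using convex_zero_ends uv t by blast
    then show ?thesis by (simp add: \<psi>_def)
  qed
  have lo: "- w t \<le> f t - L t" if t: "t \<in> {u..v}" for t
  proof -
    define \<psi> where "\<psi> t = - (f t - L t) - w t" for t
    have "convex_on {u..v} \<psi>"
    proof (rule f''_ge0_imp_convex[OF cv])
      show "(\<psi> has_real_derivative (- (f' t - c) - K * ((v - t) - (t - u)) / 2)) (at t)" if "t \<in> {u..v}" for t
        unfolding \<psi>_def L_def w_def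
        by (auto intro!: derivative_eq_intros d1[OF that] simp: field_simps)
      show "((\<lambda>t. - (f' t - c) - K * ((v - t) - (t - u)) / 2) has_real_derivative (- f'' t + K)) (at t)"
        if "t \<in> {u..v}" for t
        by (auto intro!: derivative_eq_intros d2[OF that] simp: field_simps)
      show "0 \<le> - f'' t + K" if "t \<in> {u..v}" for t using bd[OF that] by linarith
    qed
    moreover have "\<psi> u = 0" "\<psi> v = 0" by (auto simp: \<psi>_def Lu Lv w_def)
    ultimately have "\<psi> t \<le> 0" using convex_zero_ends uv t by blast
    then show ?thesis by (simp add: \<psi>_def)
  qed
  have contf: "continuous_on {u..v} f"
    using d1 by (meson DERIV_continuous continuous_at_imp_continuous_on)
  have intf: "(f has_integral integral {u..v} f) {u..v}"
    using integrable_continuous_interval[OF contf] by (simp add: integrable_integral)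
  have intL: "(L has_integral ((f u + f v) / 2 * (v - u))) {u..v}"
  proof -
    have "(L has_integral ((\<lambda>t. f u * t + c * (t - u)^2 / 2) v - (\<lambda>t. f u * t + c * (t - u)^2 / 2) u)) {u..v}"
      unfolding L_def using uv
      by (intro fundamental_theorem_of_calculus)
         (auto simp flip: has_real_derivative_iff_has_vector_derivative intro!: derivative_eq_intros simp: field_simps power2_eq_square)
    moreover have "(\<lambda>t. f u * t + c * (t - u)^2 / 2) v - (\<lambda>t. f u * t + c * (t - u)^2 / 2) u
        = (f u + f v) / 2 * (v - u)"
      using uv by (simp add: c_def power2_eq_square field_simps)
    ultimately show ?thesis by metis
  qed
  have intw: "(w has_integral (K * (v - u) ^ 3 / 12)) {u..v}"
  proof -
    define W where "W t = K / 2 * ((v - u) * (t - u)^2 / 2 - (t - u)^3 / 3)" for t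
    have "(w has_integral (W v - W u)) {u..v}"
      unfolding w_def W_def using uv
      by (intro fundamental_theorem_of_calculus)
         (auto simp flip: has_real_derivative_iff_has_vector_derivative intro!: derivative_eq_intros simp: field_simps power2_eq_square)
    moreover have "W v - W u = K * (v - u) ^ 3 / 12"
      by (simp add: W_def power2_eq_square power3_eq_cube field_simps)
    ultimately show ?thesis by metis
  qed
  have intg: "((\<lambda>t. f t - L t) has_integral (integral {u..v} f - (f u + f v) / 2 * (v - u))) {u..v}"
    by (rule has_integral_diff[OF intf intL])
  have i1: "integral {u..v} f - (f u + f v) / 2 * (v - u) \<le> K * (v - u) ^ 3 / 12"
    by (rule has_integral_le[OF intg intw]) (use up in auto)
  have i2: "- (K * (v - u) ^ 3 / 12) \<le> integral {u..v} f - (f u + f v) / 2 * (v - u)"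
    by (rule has_integral_le[OF has_integral_neg[OF intw] intg]) (use lo in auto)
  show ?thesis using i1 i2 by linarith
qed

lemma part_mono:
  fixes x :: "nat \<Rightarrow> real"
  assumes "\<And>i. i < n \<Longrightarrow> x i < x (Suc i)"
  shows "i \<le> j \<Longrightarrow> j \<le> n \<Longrightarrow> x i \<le> x j"
proof (induction j)
  case 0 then show ?case by simp
next
  case (Suc j)
  show ?case
  proof (cases "i = Suc j")
    case False
    then have "x i \<le> x j" using Suc by simp
    also have "x j \<le> x (Suc j)" using assms[of j] Suc by simp
    finally show ?thesis .
  qed simp
qed

lemma integral_partition:
  fixes x :: "nat \<Rightarrow> real" and f :: "real \<Rightarrow> real"
  assumes "\<And>i. i < n \<Longrightarrow> x i < x (Suc i)" "continuous_on {x 0..x n} f"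
  shows "integral {x 0..x n} f = (\<Sum>i<n. integral {x i..x (Suc i)} f)"
  using assms
proof (induction n)
  case 0 then show ?case by simp
next
  case (Suc n)
  have m: "x 0 \<le> x n" using part_mono[of "Suc n" x 0 n] Suc.prems(1) by simp
  have m2: "x n \<le> x (Suc n)" using Suc.prems(1)[of n] by simp
  have "continuous_on {x 0..x n} f"
    using Suc.prems(2) by (rule continuous_on_subset) (use m2 in auto)
  then have IH: "integral {x 0..x n} f = (\<Sum>i<n. integral {x i..x (Suc i)} f)"
    using Suc.IH Suc.prems(1) by simp
  have "integral {x 0..x n} f + integral {x n..x (Suc n)} f = integral {x 0..x (Suc n)} f"
    by (rule Henstock_Kurzweil_Integration.integral_combine[OF m m2 integrable_continuous_interval[OF Suc.prems(2)]])
  then show ?case using IH by simp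
qed

theorem proposition1:
  fixes I :: "real set" and f f' f'' :: "real \<Rightarrow> real"
    and a b p q :: real and n :: nat and x :: "nat \<Rightarrow> real"
  assumes I: "is_interval I" "I \<subseteq> {0..}"
    and f': "\<And>t. t \<in> interior I \<Longrightarrow> (f has_real_derivative f' t) (at t)"
    and f'': "\<And>t. t \<in> interior I \<Longrightarrow> (f' has_real_derivative f'' t) (at t)"
    and ab: "a \<in> interior I" "b \<in> interior I" "a < b"
    and L1: "f'' absolutely_integrable_on {a..b}"
    and q: "q > 1" and p: "p = q / (q - 1)" and pq: "2 * q - p - 1 > 0"
    and qc: "quasi_convex_on {a..b} (\<lambda>t. \<bar>f'' t\<bar> powr q)"
    and part: "x 0 = a" "x n = b" "\<And>i. i < n \<Longrightarrow> x i < x (Suc i)"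
  shows "\<bar>integral {a..b} f
            - (\<Sum>i<n. (f (x i) + f (x (Suc i))) / 2 * (x (Suc i) - x i))\<bar>
         \<le> 1/2 * ((q - 1) / (2 * q - p - 1)) powr ((q - 1) / q)
             * (beta_fun (p + 1) (q + 1)) powr (1 / q)
             * (\<Sum>i<n. (x (Suc i) - x i) ^ 3
                  * (max (\<bar>f'' (x i)\<bar> powr q) (\<bar>f'' (x (Suc i))\<bar> powr q)) powr (1 / q))"
proof -
  define C where "C = ((q - 1) / (2 * q - p - 1)) powr ((q - 1) / q) * (beta_fun (p + 1) (q + 1)) powr (1 / q)"
  have C6: "1/6 \<le> C" unfolding C_def by (rule const_bound[OF q p pq])
  have cvx: "convex (interior I)" using I(1) by (simp add: is_interval_convex convex_interior)
  have abI: "{a..b} \<subseteq> interior I"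
    using closed_segment_subset[OF ab(1,2) cvx] ab(3) by (simp add: closed_segment_eq_real_ivl)
  define M where "M i = max (\<bar>f'' (x i)\<bar> powr q) (\<bar>f'' (x (Suc i))\<bar> powr q)" for i
  have sub: "{x i..x (Suc i)} \<subseteq> {a..b}" if i: "i < n" for i
  proof -
    have "x 0 \<le> x i" by (rule part_mono[of n x, OF part(3)]) (use i in auto)
    moreover have "x (Suc i) \<le> x n" by (rule part_mono[of n x, OF part(3)]) (use i in auto)
    ultimately show ?thesis using part(1,2) by auto
  qed
  have loc: "\<bar>integral {x i..x (Suc i)} f - (f (x i) + f (x (Suc i))) / 2 * (x (Suc i) - x i)\<bar>
      \<le> 1/2 * C * ((x (Suc i) - x i) ^ 3 * M i powr (1 / q))" if i: "i < n" for i
  proof -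
    let ?u = "x i" and ?v = "x (Suc i)"
    have uv: "?u < ?v" using part(3)[OF i] .
    have inI: "t \<in> interior I" if "t \<in> {?u..?v}" for t using sub[OF i] abI that by blast
    have bd: "\<bar>f'' t\<bar> \<le> M i powr (1 / q)" if t: "t \<in> {?u..?v}" for t
    proof -
      define l where "l = (?v - t) / (?v - ?u)"
      have l: "0 \<le> l" "l \<le> 1" using t uv by (auto simp: l_def field_simps)
      have "l * (?v - ?u) = ?v - t" using uv by (simp add: l_def)
      then have tl: "t = l * ?u + (1 - l) * ?v" by (simp add: algebra_simps)
      have "?u \<in> {a..b}" "?v \<in> {a..b}" using sub[OF i] uv by auto
      then have "\<bar>f'' t\<bar> powr q \<le> M i"
        using qc l unfolding quasi_convex_on_def M_def tl by blast
      then have "(\<bar>f'' t\<bar> powr q) powr (1 / q) \<le> M i powr (1 / q)"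
        by (intro powr_mono2) (use q in auto)
      then show ?thesis using q by (simp add: powr_powr)
    qed
    have "\<bar>integral {?u..?v} f - (f ?u + f ?v) / 2 * (?v - ?u)\<bar> \<le> M i powr (1 / q) * (?v - ?u) ^ 3 / 12"
      by (rule trap_local[OF uv]) (use f' f'' inI bd in auto)
    also have "\<dots> \<le> 1/2 * C * ((?v - ?u) ^ 3 * M i powr (1 / q))"
    proof -
      have "0 \<le> (?v - ?u) ^ 3 * M i powr (1 / q)" using uv by simp
      from mult_right_mono[OF C6 this] show ?thesis by (simp add: mult.commute)
    qed
    finally show ?thesis .
  qed
  have contf: "continuous_on {x 0..x n} f"
    using f' abI part(1,2) by (meson DERIV_continuous continuous_at_imp_continuous_on subsetD)
  have "integral {a..b} f = (\<Sum>i<n. integral {x i..x (Suc i)} f)"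
    using integral_partition[OF part(3) contf] part(1,2) by simp
  then have "\<bar>integral {a..b} f - (\<Sum>i<n. (f (x i) + f (x (Suc i))) / 2 * (x (Suc i) - x i))\<bar>
      = \<bar>\<Sum>i<n. integral {x i..x (Suc i)} f - (f (x i) + f (x (Suc i))) / 2 * (x (Suc i) - x i)\<bar>"
    by (simp add: sum_subtractf)
  also have "\<dots> \<le> (\<Sum>i<n. \<bar>integral {x i..x (Suc i)} f - (f (x i) + f (x (Suc i))) / 2 * (x (Suc i) - x i)\<bar>)"
    by (rule sum_abs)
  also have "\<dots> \<le> (\<Sum>i<n. 1/2 * C * ((x (Suc i) - x i) ^ 3 * M i powr (1 / q)))"
    by (rule sum_mono) (use loc in auto)
  also have "\<dots> = 1/2 * C * (\<Sum>i<n. (x (Suc i) - x i) ^ 3 * M i powr (1 / q))"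
    by (simp add: sum_distrib_left)
  finally show ?thesis by (simp add: C_def M_def)
qed

end
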